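(* Let $\Gamma$ be a connected $(Y,Y')$-bipartite graph that is distance-semiregular with respect to $Y$, with intersection numbers $b_i,c_i$ ($0\le i\le4$), and assume every vertex of $Y$ has eccentricity $4$. Let $b'_0$ denote the valency of the vertices of $Y'$. Then $\Gamma$ is the incidence graph of a $(v,b,r,k,\lambda_1,0)$ SPBIBD of type $(b_1,c_3)$ with point set $Y$ and block set $Y'$ (incidence = adjacency), where $$v=1+\frac{b_0b_1}{c_2}+\frac{b_0b_1b_2b_3}{c_2c_3c_4},\quad b=b_0+\frac{b_0b_1b_2}{c_2c_3},\quad r=b_0,\quad k=b'_0,\quad \lambda_1=c_2.$$
   Context: For a connected graph, $\Gamma_i(u)$ is the set of vertices at distance $i$ from $u$, $\Gamma(u)=\Gamma_1(u)$, $\varepsilon(u)$ the eccentricity. For $w\in\Gamma_i(u)$, $b_i(u,w)=|\Gamma_{i+1}(u)\cap\Gamma(w)|$, $c_i(u,w)=|\Gamma_{i-1}(u)\cap\Gamma(w)|$. A graph is $(Y,Y')$-bipartite if its vertex set is $Y\sqcup Y'$ with every edge joining $Y$ to $Y'$. A connected $(Y,Y')$-bipartite graph is distance-semiregular with respect to $Y$ if there are constants $b_i,c_i$ with $b_i(x,w)=b_i$ and $c_i(x,w)=c_i$ for all $x\in Y$, $0\le i\le\varepsilon(x)$, $w\in\Gamma_i(x)$; then vertices of $Y$ have valency $b_0$ and vertices of $Y'$ have valency $b_1+1$. A design $\mathcal{D}=(\mathcal{P},\mathcal{B},\mathcal{I})$ is an incidence structure with $|\mathcal{P}|=v$, $|\mathcal{B}|=b$,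 every block incident with exactly $k$ points and every point with exactly $r$ blocks. $(p,B)$ is a flag if $p\in B$, a non-flag otherwise. $\mathcal{D}$ is a $(v,b,r,k,\lambda_1,\lambda_2)$ SPBIBD of type $(s,t)$ if (i) any two distinct points are together in exactly $\lambda_1$ or exactly $\lambda_2$ blocks; (ii) for every flag $(p,B)$, the number of points of $B$ other than $p$ lying with $p$ in exactly $\lambda_1$ blocks is $s$; (iii) for every non-flag $(p,B)$, the number of points of $B$ lying with $p$ in exactly $\lambda_1$ blocks is $t$. The incidence graph is the bipartite graph on $\mathcal{P}\cup\mathcal{B}$ with $p\sim B$ iff $p\in B$. *)

theory Defs
  imports Complex_Main
begin

definition graph :: "'a set \<Rightarrow> ('a \<Rightarrow> 'a \<Rightarrow> bool) \<Rightarrow> bool" where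
  "graph V E \<longleftrightarrow> finite V \<and> (\<forall>x y. E x y \<longrightarrow> x \<in> V \<and> y \<in> V \<and> E y x \<and> x \<noteq> y)"

inductive walk :: "('a \<Rightarrow> 'a \<Rightarrow> bool) \<Rightarrow> 'a \<Rightarrow> 'a \<Rightarrow> nat \<Rightarrow> bool" for E where
  walk_nil: "walk E u u 0"
| walk_cons: "E u x \<Longrightarrow> walk E x w n \<Longrightarrow> walk E u w (Suc n)"

definition connected_graph :: "'a set \<Rightarrow> ('a \<Rightarrow> 'a \<Rightarrow> bool) \<Rightarrow> bool" where
  "connected_graph V E \<longleftrightarrow> graph V E \<and> V \<noteq> {} \<and> (\<forall>u\<in>V. \<forall>w\<in>V. \<exists>n. walk E u w n)"

definition dist :: "('a \<Rightarrow> 'a \<Rightarrow> bool) \<Rightarrow> 'a \<Rightarrow> 'a \<Rightarrow> nat" where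
  "dist E u w = (LEAST n. walk E u w n)"

definition nbhd :: "'a set \<Rightarrow> ('a \<Rightarrow> 'a \<Rightarrow> bool) \<Rightarrow> 'a \<Rightarrow> 'a set" where
  "nbhd V E u = {w \<in> V. E u w}"

definition sphere :: "'a set \<Rightarrow> ('a \<Rightarrow> 'a \<Rightarrow> bool) \<Rightarrow> 'a \<Rightarrow> nat \<Rightarrow> 'a set" where
  "sphere V E u i = {w \<in> V. dist E u w = i}"

definition ecc :: "'a set \<Rightarrow> ('a \<Rightarrow> 'a \<Rightarrow> bool) \<Rightarrow> 'a \<Rightarrow> nat" where
  "ecc V E u = Max (dist E u ` V)"

definition b_num :: "'a set \<Rightarrow> ('a \<Rightarrow> 'a \<Rightarrow> bool) \<Rightarrow> nat \<Rightarrow> 'a \<Rightarrow> 'a \<Rightarrow> nat" where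
  "b_num V E i u w = card (sphere V E u (i + 1) \<inter> nbhd V E w)"

text \<open>For i = 0 the set \<Gamma>_{-1}(u) is empty; we make this explicit.\<close>
definition c_num :: "'a set \<Rightarrow> ('a \<Rightarrow> 'a \<Rightarrow> bool) \<Rightarrow> nat \<Rightarrow> 'a \<Rightarrow> 'a \<Rightarrow> nat" where
  "c_num V E i u w = (if i = 0 then 0 else card (sphere V E u (i - 1) \<inter> nbhd V E w))"

definition bipartite :: "'a set \<Rightarrow> ('a \<Rightarrow> 'a \<Rightarrow> bool) \<Rightarrow> 'a set \<Rightarrow> 'a set \<Rightarrow> bool" where
  "bipartite V E Y Y' \<longleftrightarrow> V = Y \<union> Y' \<and> Y \<inter> Y' = {} \<and>
     (\<forall>x y. E x y \<longrightarrow> (x \<in> Y \<and> y \<in> Y') \<or> (x \<in> Y' \<and> y \<in> Y))"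

definition distance_semiregular ::
  "'a set \<Rightarrow> ('a \<Rightarrow> 'a \<Rightarrow> bool) \<Rightarrow> 'a set \<Rightarrow> 'a set \<Rightarrow> (nat \<Rightarrow> nat) \<Rightarrow> (nat \<Rightarrow> nat) \<Rightarrow> bool" where
  "distance_semiregular V E Y Y' b c \<longleftrightarrow> connected_graph V E \<and> bipartite V E Y Y' \<and>
     (\<forall>x\<in>Y. \<forall>i \<le> ecc V E x. \<forall>w\<in>sphere V E x i.
        b_num V E i x w = b i \<and> c_num V E i x w = c i)"

definition design :: "'a set \<Rightarrow> 'a set \<Rightarrow> ('a \<Rightarrow> 'a \<Rightarrow> bool) \<Rightarrow> nat \<Rightarrow> nat \<Rightarrow> nat \<Rightarrow> nat \<Rightarrow> bool" where
  "design P Bs I v bb r k \<longleftrightarrow> finite P \<and> finite Bs \<and> card P = v \<and> card Bs = bb \<and>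
     (\<forall>B\<in>Bs. card {p \<in> P. I p B} = k) \<and> (\<forall>p\<in>P. card {B \<in> Bs. I p B} = r)"

definition lam :: "'a set \<Rightarrow> ('a \<Rightarrow> 'a \<Rightarrow> bool) \<Rightarrow> 'a \<Rightarrow> 'a \<Rightarrow> nat" where
  "lam Bs I p q = card {B \<in> Bs. I p B \<and> I q B}"

definition SPBIBD :: "'a set \<Rightarrow> 'a set \<Rightarrow> ('a \<Rightarrow> 'a \<Rightarrow> bool) \<Rightarrow> nat \<Rightarrow> nat \<Rightarrow> nat \<Rightarrow> nat
    \<Rightarrow> nat \<Rightarrow> nat \<Rightarrow> nat \<Rightarrow> nat \<Rightarrow> bool" where
  "SPBIBD P Bs I v bb r k l1 l2 s t \<longleftrightarrow> design P Bs I v bb r k \<and>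
     (\<forall>p\<in>P. \<forall>q\<in>P. p \<noteq> q \<longrightarrow> lam Bs I p q = l1 \<or> lam Bs I p q = l2) \<and>
     (\<forall>p\<in>P. \<forall>B\<in>Bs. I p B \<longrightarrow> card {q \<in> P. q \<noteq> p \<and> I q B \<and> lam Bs I p q = l1} = s) \<and>
     (\<forall>p\<in>P. \<forall>B\<in>Bs. \<not> I p B \<longrightarrow> card {q \<in> P. I q B \<and> lam Bs I p q = l1} = t)"

end

theory Submission
  imports Defs
begin

lemma double_count:
  assumes "finite A" "finite B"
  shows "(\<Sum>w\<in>A. card {u\<in>B. R u w}) = (\<Sum>u\<in>B. card {w\<in>A. R u w})"
proof -
  have c: "\<And>C P. finite C \<Longrightarrow> card {u\<in>C. P u} = (\<Sum>u\<in>C. if P u then 1 else (0::nat))"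
    by (simp add: sum.If_cases Int_def)
  show ?thesis using assms by (simp add: c sum.swap[of _ A B])
qed

lemma le4_cases: "(n::nat) \<le> 4 \<Longrightarrow> n = 0 \<or> n = 1 \<or> n = 2 \<or> n = 3 \<or> n = 4"
  by arith

lemma even4: "even (n::nat) \<Longrightarrow> n \<le> 4 \<Longrightarrow> n = 0 \<or> n = 2 \<or> n = 4"
  using le4_cases[of n] by auto

lemma odd4: "odd (n::nat) \<Longrightarrow> n \<le> 4 \<Longrightarrow> n = 1 \<or> n = 3"
  using le4_cases[of n] by auto

lemma walk_snoc: "walk E u w n \<Longrightarrow> E w x \<Longrightarrow> walk E u x (Suc n)"
  by (induction rule: walk.induct) (auto intro: walk.intros)

lemma walk0: "walk E u w 0 \<longleftrightarrow> u = w"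
  by (auto elim: walk.cases intro: walk.intros)

lemma walk_last: "walk E u w m \<Longrightarrow> 0 < m \<Longrightarrow> \<exists>y. walk E u y (m - 1) \<and> E y w"
proof (induction rule: walk.induct)
  case (walk_nil u) then show ?case by simp
next
  case (walk_cons u x w n)
  show ?case
  proof (cases n)
    case 0
    with walk_cons.hyps(2) have "x = w" by (simp add: walk0)
    with walk_cons.hyps(1) 0 show ?thesis by (auto intro: walk.intros)
  next
    case (Suc k)
    with walk_cons.IH obtain y where "walk E x y k" "E y w" by auto
    with walk_cons.hyps(1) Suc show ?thesis by (auto intro: walk.intros)
  qed
qed

lemma walk1: "walk E u w (Suc 0) \<longleftrightarrow> E u w"
proof
  assume "walk E u w (Suc 0)"
  then obtain y where "walk E u y 0" "E y w" using walk_last by fastforce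
  then show "E u w" by (simp add: walk0)
next
  assume "E u w" then show "walk E u w (Suc 0)" by (auto intro: walk.intros)
qed

lemma wdist_le: "walk E u w n \<Longrightarrow> dist E u w \<le> n"
  unfolding dist_def by (rule Least_le)

lemma walk_V: assumes "graph V E" shows "walk E u w n \<Longrightarrow> u \<in> V \<Longrightarrow> w \<in> V"
  by (induction rule: walk.induct) (use assms in \<open>auto simp: graph_def\<close>)

lemma walk_parity:
  assumes "graph V E" "bipartite V E Y Y'"
  shows "walk E u w n \<Longrightarrow> u \<in> V \<Longrightarrow> (w \<in> Y \<longleftrightarrow> (u \<in> Y \<longleftrightarrow> even n))"
proof (induction rule: walk.induct)
  case (walk_nil u) then show ?case by simp
next
  case (walk_cons u x w n)
  have "x \<in> V" using walk_cons.hyps(1) assms(1) by (auto simp: graph_def)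
  moreover have "u \<in> Y \<longleftrightarrow> x \<notin> Y" using walk_cons.hyps(1) assms(2) by (auto simp: bipartite_def)
  ultimately show ?case using walk_cons.IH by auto
qed

locale dsr4 =
  fixes V :: "'a set" and E Y Y' and b c :: "nat \<Rightarrow> nat"
  assumes dsr: "distance_semiregular V E Y Y' b c"
    and ecc4: "\<forall>x\<in>Y. ecc V E x = 4"
begin

lemma conn: "connected_graph V E" using dsr by (simp add: distance_semiregular_def)
lemma G: "graph V E" using conn by (simp add: connected_graph_def)
lemma bip: "bipartite V E Y Y'" using dsr by (simp add: distance_semiregular_def)
lemma finV: "finite V" using G by (simp add: graph_def)
lemma VY: "V = Y \<union> Y'" "Y \<inter> Y' = {}" using bip by (auto simp: bipartite_def)
lemma Esym: "E u w \<Longrightarrow> E w u" using G by (auto simp: graph_def)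
lemma EV: "E u w \<Longrightarrow> u \<in> V" "E u w \<Longrightarrow> w \<in> V" using G by (auto simp: graph_def)
lemma Eneq: "E u w \<Longrightarrow> u \<noteq> w" using G by (auto simp: graph_def)
lemma Eside: "E u w \<Longrightarrow> (u \<in> Y \<and> w \<in> Y') \<or> (u \<in> Y' \<and> w \<in> Y)" using bip by (auto simp: bipartite_def)

lemma dw: "u \<in> V \<Longrightarrow> w \<in> V \<Longrightarrow> walk E u w (dist E u w)"
  using conn unfolding connected_graph_def dist_def by (metis LeastI_ex)

lemma parity: "x \<in> Y \<Longrightarrow> w \<in> V \<Longrightarrow> (w \<in> Y \<longleftrightarrow> even (dist E x w))"
  using walk_parity[OF G bip dw] VY by blast

lemma dist0: "u \<in> V \<Longrightarrow> w \<in> V \<Longrightarrow> dist E u w = 0 \<longleftrightarrow> u = w"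
  using dw[of u w] walk0[of E u w] wdist_le[of E u u 0] walk.walk_nil[of E u] by auto

lemma dist1: "u \<in> V \<Longrightarrow> w \<in> V \<Longrightarrow> dist E u w = 1 \<longleftrightarrow> E u w"
proof
  assume "u \<in> V" "w \<in> V" "dist E u w = 1"
  then have "walk E u w (Suc 0)" using dw[of u w] by simp
  then show "E u w" by (simp add: walk1)
next
  assume a: "u \<in> V" "w \<in> V" "E u w"
  then have "dist E u w \<le> 1" using wdist_le[of E u w 1] walk1[of E u w] by simp
  moreover have "dist E u w \<noteq> 0" using a dist0 Eneq by auto
  ultimately show "dist E u w = 1" by simp
qed

lemma dist_adj: "u \<in> V \<Longrightarrow> E w w' \<Longrightarrow> dist E u w' \<le> dist E u w + 1"
  using dw[of u w] EV[of w w'] walk_snoc wdist_le by fastforce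

lemma dist_pred: "u \<in> V \<Longrightarrow> w \<in> V \<Longrightarrow> dist E u w = Suc n \<Longrightarrow> \<exists>y. E y w \<and> dist E u y = n"
proof -
  assume a: "u \<in> V" "w \<in> V" "dist E u w = Suc n"
  then obtain y where y: "walk E u y n" "E y w" using dw[of u w] walk_last by fastforce
  have "dist E u y \<le> n" by (rule wdist_le[OF y(1)])
  moreover have "dist E u w \<le> dist E u y + 1" using dist_adj a y by blast
  ultimately show ?thesis using a y by auto
qed

lemma dist_ex: "u \<in> V \<Longrightarrow> \<forall>w. w \<in> V \<longrightarrow> dist E u w = n \<longrightarrow> (\<forall>i\<le>n. \<exists>y\<in>V. dist E u y = i)"
proof (induction n)
  case 0 then show ?case by auto
next
  case (Suc n)
  show ?case
  proof (intro allI impI)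
    fix w i assume w: "w \<in> V" "dist E u w = Suc n" and i: "i \<le> Suc n"
    show "\<exists>y\<in>V. dist E u y = i"
    proof (cases "i = Suc n")
      case True then show ?thesis using w by auto
    next
      case False
      obtain y where "E y w" "dist E u y = n" using dist_pred Suc.prems w by blast
      then show ?thesis using Suc.IH Suc.prems EV False i by fastforce
    qed
  qed
qed

lemma dist_le4: "x \<in> Y \<Longrightarrow> w \<in> V \<Longrightarrow> dist E x w \<le> 4"
  using ecc4 finV unfolding ecc_def by (metis Max_ge finite_imageI imageI)

lemma exists4: "x \<in> Y \<Longrightarrow> \<exists>w\<in>V. dist E x w = 4"
proof -
  assume x: "x \<in> Y"
  then have "V \<noteq> {}" using VY by auto
  then have "Max (dist E x ` V) \<in> dist E x ` V" using finV by (simp add: Max_in)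
  then show ?thesis using ecc4 x unfolding ecc_def by auto
qed

lemma sphere_ne: "x \<in> Y \<Longrightarrow> i \<le> 4 \<Longrightarrow> sphere V E x i \<noteq> {}"
proof -
  assume x: "x \<in> Y" "i \<le> 4"
  obtain w where "w \<in> V" "dist E x w = 4" using exists4 x by blast
  then obtain y where "y \<in> V" "dist E x y = i" using dist_ex[of x 4] x VY by blast
  then show ?thesis by (auto simp: sphere_def)
qed

lemma reg: "x \<in> Y \<Longrightarrow> w \<in> V \<Longrightarrow>
   b_num V E (dist E x w) x w = b (dist E x w) \<and> c_num V E (dist E x w) x w = c (dist E x w)"
  using dsr dist_le4[of x w] ecc4 unfolding distance_semiregular_def sphere_def by auto

lemma nbhd_eq: "nbhd V E w = {u\<in>V. E u w}"
  unfolding nbhd_def using Esym by auto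

lemma count_step:
  assumes x: "x \<in> Y" and i: "1 \<le> i" "i \<le> 4"
  shows "card (sphere V E x i) * c i = card (sphere V E x (i - 1)) * b (i - 1)"
proof -
  let ?A = "sphere V E x i" and ?B = "sphere V E x (i - 1)"
  have fA: "finite ?A" and fB: "finite ?B" using finV by (auto simp: sphere_def)
  have "(\<Sum>w\<in>?A. card {u\<in>?B. E u w}) = (\<Sum>w\<in>?A. c i)"
  proof (rule sum.cong)
    fix w assume w: "w \<in> ?A"
    then have "c_num V E i x w = c i" using reg[of x w] x by (auto simp: sphere_def)
    moreover have "{u\<in>?B. E u w} = ?B \<inter> nbhd V E w" using nbhd_eq by (auto simp: sphere_def)
    ultimately show "card {u\<in>?B. E u w} = c i" using i by (simp add: c_num_def)
  qed simp
  moreover have "(\<Sum>u\<in>?B. card {w\<in>?A. E u w}) = (\<Sum>u\<in>?B. b (i - 1))"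
  proof (rule sum.cong)
    fix u assume u: "u \<in> ?B"
    then have "b_num V E (i - 1) x u = b (i - 1)" using reg[of x u] x by (auto simp: sphere_def)
    moreover have "{w\<in>?A. E u w} = ?A \<inter> nbhd V E u" by (auto simp: nbhd_def sphere_def)
    ultimately show "card {w\<in>?A. E u w} = b (i - 1)" using i by (simp add: b_num_def)
  qed simp
  ultimately show ?thesis using double_count[OF fA fB, of E] by simp
qed

lemma c_pos: assumes x: "x \<in> Y" and i: "1 \<le> i" "i \<le> 4" shows "1 \<le> c i"
proof -
  obtain w where w: "w \<in> sphere V E x i" using sphere_ne[OF x i(2)] by blast
  then have wV: "w \<in> V" and dw: "dist E x w = Suc (i - 1)" using i by (auto simp: sphere_def)
  have xV: "x \<in> V" using x VY by auto
  obtain y where y: "E y w" "dist E x y = i - 1" using dist_pred[OF xV wV dw] by blast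
  have "y \<in> sphere V E x (i - 1) \<inter> nbhd V E w" using y EV Esym by (auto simp: sphere_def nbhd_def)
  moreover have "finite (sphere V E x (i - 1) \<inter> nbhd V E w)" using finV by (auto simp: sphere_def)
  ultimately have "1 \<le> card (sphere V E x (i - 1) \<inter> nbhd V E w)"
    by (metis One_nat_def Suc_leI card_gt_0_iff empty_iff)
  moreover have "c_num V E i x w = c i" using reg[of x w] x wV w by (auto simp: sphere_def)
  ultimately show ?thesis using i by (simp add: c_num_def)
qed

lemma c1: assumes x: "x \<in> Y" shows "c 1 = 1"
proof -
  obtain w where w: "w \<in> sphere V E x 1" using sphere_ne[OF x] by fastforce
  then have wV: "w \<in> V" using w by (auto simp: sphere_def)
  have xV: "x \<in> V" using x VY by auto
  have "sphere V E x 0 = {x}" using dist0[OF xV] xV by (auto simp: sphere_def)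
  then have "card (sphere V E x 0 \<inter> nbhd V E w) \<le> 1"
    using card_mono[of "{x}" "{x} \<inter> nbhd V E w"] by auto
  moreover have "c_num V E 1 x w = c 1" using reg[of x w] x wV w by (auto simp: sphere_def)
  ultimately have "c 1 \<le> 1" by (simp add: c_num_def)
  then show ?thesis using c_pos[OF x] by force
qed


lemma xV: "x \<in> Y \<Longrightarrow> x \<in> V" using VY by auto

lemma finS: "finite (sphere V E x i)" using finV by (auto simp: sphere_def)

lemma notY': "p \<in> Y \<Longrightarrow> p \<notin> Y'" using VY by auto

lemma sphere_cards:
  assumes x: "x \<in> Y"
  shows "real (card Y) = 1 + real (b 0 * b 1) / real (c 2)
                  + real (b 0 * b 1 * b 2 * b 3) / real (c 2 * c 3 * c 4)
      \<and> real (card Y') = real (b 0) + real (b 0 * b 1 * b 2) / real (c 2 * c 3)"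
proof -
  let ?S = "sphere V E x"
  have S0: "?S 0 = {x}" using dist0[OF xV[OF x]] xV[OF x] by (auto simp: sphere_def)
  have e1: "card (?S 1) * c 1 = card (?S 0) * b 0" using count_step[OF x, of 1] by simp
  have e2: "card (?S 2) * c 2 = card (?S 1) * b 1" using count_step[OF x, of 2] by simp
  have e3: "card (?S 3) * c 3 = card (?S 2) * b 2" using count_step[OF x, of 3] by simp
  have e4: "card (?S 4) * c 4 = card (?S 3) * b 3" using count_step[OF x, of 4] by simp
  have c2: "c 2 \<ge> 1" and c3: "c 3 \<ge> 1" and c4: "c 4 \<ge> 1" using c_pos[OF x] by auto
  have s1: "card (?S 1) = b 0" using e1 c1[OF x] S0 by simp
  have Yeq: "Y = ?S 0 \<union> ?S 2 \<union> ?S 4"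
  proof
    show "Y \<subseteq> ?S 0 \<union> ?S 2 \<union> ?S 4"
    proof
      fix w assume w: "w \<in> Y"
      then have wV: "w \<in> V" by (rule xV)
      have "even (dist E x w)" using parity[OF x wV] w by simp
      moreover have "dist E x w \<le> 4" using dist_le4[OF x wV] .
      ultimately have "dist E x w = 0 \<or> dist E x w = 2 \<or> dist E x w = 4" by (rule even4)
      then show "w \<in> ?S 0 \<union> ?S 2 \<union> ?S 4" using wV by (auto simp: sphere_def)
    qed
  next
    show "?S 0 \<union> ?S 2 \<union> ?S 4 \<subseteq> Y" using parity[OF x] by (auto simp: sphere_def)
  qed
  have Y'eq: "Y' = ?S 1 \<union> ?S 3"
  proof
    show "Y' \<subseteq> ?S 1 \<union> ?S 3"
    proof
      fix w assume w: "w \<in> Y'"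
      then have wV: "w \<in> V" using VY by auto
      have "odd (dist E x w)" using parity[OF x wV] w VY by auto
      moreover have "dist E x w \<le> 4" using dist_le4[OF x wV] .
      ultimately have "dist E x w = 1 \<or> dist E x w = 3" by (rule odd4)
      then show "w \<in> ?S 1 \<union> ?S 3" using wV by (auto simp: sphere_def)
    qed
  next
    show "?S 1 \<union> ?S 3 \<subseteq> Y'"
    proof
      fix w assume "w \<in> ?S 1 \<union> ?S 3"
      then have wV: "w \<in> V" and "odd (dist E x w)" by (auto simp: sphere_def)
      then have "w \<notin> Y" using parity[OF x wV] by simp
      then show "w \<in> Y'" using wV VY by auto
    qed
  qed
  have d1: "?S 0 \<inter> ?S 2 = {}" "(?S 0 \<union> ?S 2) \<inter> ?S 4 = {}" "?S 1 \<inter> ?S 3 = {}"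
    by (auto simp: sphere_def)
  have "card Y = card (?S 0 \<union> ?S 2) + card (?S 4)"
    unfolding Yeq by (rule card_Un_disjoint) (use finS d1 in auto)
  moreover have "card (?S 0 \<union> ?S 2) = card (?S 0) + card (?S 2)"
    by (rule card_Un_disjoint) (use finS d1 in auto)
  ultimately have cY: "card Y = 1 + card (?S 2) + card (?S 4)" using S0 by simp
  have cY': "card Y' = card (?S 1) + card (?S 3)"
    unfolding Y'eq by (rule card_Un_disjoint) (use finS d1 in auto)
  have r2: "real (card (?S 2)) = real (b 0 * b 1) / real (c 2)"
    using e2 s1 c2 by (simp add: field_simps flip: of_nat_mult)
  have r3: "real (card (?S 3)) = real (b 0 * b 1 * b 2) / real (c 2 * c 3)"
  proof -
    have "real (card (?S 3)) * real (c 3) = real (card (?S 2)) * real (b 2)"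
      using e3 by (metis of_nat_mult)
    then show ?thesis using r2 c2 c3 by (simp add: field_simps)
  qed
  have r4: "real (card (?S 4)) = real (b 0 * b 1 * b 2 * b 3) / real (c 2 * c 3 * c 4)"
  proof -
    have "real (card (?S 4)) * real (c 4) = real (card (?S 3)) * real (b 3)"
      using e4 by (metis of_nat_mult)
    then show ?thesis using r3 c2 c3 c4 by (simp add: field_simps)
  qed
  show ?thesis using cY cY' r2 r3 r4 s1 by simp
qed

lemma lam_cases:
  assumes p: "p \<in> Y" and q: "q \<in> Y" and pq: "p \<noteq> q"
  shows "(dist E p q = 2 \<and> lam Y' E p q = c 2) \<or> (dist E p q = 4 \<and> lam Y' E p q = 0)"
proof -
  have pV: "p \<in> V" and qV: "q \<in> V" using p q by (auto intro: xV)
  have "even (dist E p q)" using parity[OF p qV] q by simp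
  moreover have "dist E p q \<le> 4" using dist_le4[OF p qV] .
  moreover have "dist E p q \<noteq> 0" using dist0[OF pV qV] pq by simp
  ultimately have d: "dist E p q = 2 \<or> dist E p q = 4" using even4[of "dist E p q"] by linarith
  show ?thesis
  proof (cases "dist E p q = 2")
    case True
    have "{B \<in> Y'. E p B \<and> E q B} = sphere V E p 1 \<inter> nbhd V E q"
    proof
      show "{B \<in> Y'. E p B \<and> E q B} \<subseteq> sphere V E p 1 \<inter> nbhd V E q"
      proof
        fix B assume "B \<in> {B \<in> Y'. E p B \<and> E q B}"
        then have pB: "E p B" and qB: "E q B" by auto
        then have BV: "B \<in> V" using EV by blast
        show "B \<in> sphere V E p 1 \<inter> nbhd V E q"
          using dist1[OF pV BV] pB qB BV by (simp add: sphere_def nbhd_def)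
      qed
    next
      show "sphere V E p 1 \<inter> nbhd V E q \<subseteq> {B \<in> Y'. E p B \<and> E q B}"
      proof
        fix B assume B: "B \<in> sphere V E p 1 \<inter> nbhd V E q"
        then have BV: "B \<in> V" and "dist E p B = 1" and qB: "E q B" by (auto simp: sphere_def nbhd_def)
        then have pB: "E p B" using dist1[OF pV BV] by simp
        then have "B \<in> Y'" using Eside[OF pB] notY'[OF p] by blast
        then show "B \<in> {B \<in> Y'. E p B \<and> E q B}" using pB qB by simp
      qed
    qed
    moreover have "c_num V E 2 p q = c 2" using reg[OF p qV] True by simp
    ultimately show ?thesis using True by (simp add: lam_def c_num_def)
  next
    case False
    then have d4: "dist E p q = 4" using d by simp
    have "{B \<in> Y'. E p B \<and> E q B} = {}"
    proof (rule ccontr)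
      assume "{B \<in> Y'. E p B \<and> E q B} \<noteq> {}"
      then obtain B where pB: "E p B" and qB: "E q B" by auto
      have "walk E p q (Suc (Suc 0))"
        by (rule walk.walk_cons[OF pB walk.walk_cons[OF Esym[OF qB] walk.walk_nil[of E q]]])
      then have "dist E p q \<le> 2" using wdist_le by fastforce
      then show False using d4 by simp
    qed
    then have "lam Y' E p q = 0" unfolding lam_def by (metis card.empty)
    then show ?thesis using d4 by simp
  qed
qed

lemma lam_iff:
  assumes p: "p \<in> Y" and q: "q \<in> Y" and pq: "p \<noteq> q"
  shows "lam Y' E p q = c 2 \<longleftrightarrow> dist E p q = 2"
  using lam_cases[OF p q pq] c_pos[OF p, of 2] by auto

lemma sphere2_eq:
  assumes p: "p \<in> Y" and B: "B \<in> Y'"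
  shows "sphere V E p 2 \<inter> nbhd V E B = {q \<in> Y. q \<noteq> p \<and> E q B \<and> lam Y' E p q = c 2}"
proof
  show "sphere V E p 2 \<inter> nbhd V E B \<subseteq> {q \<in> Y. q \<noteq> p \<and> E q B \<and> lam Y' E p q = c 2}"
  proof
    fix q assume q: "q \<in> sphere V E p 2 \<inter> nbhd V E B"
    then have qV: "q \<in> V" and dq: "dist E p q = 2" and Eq: "E q B"
      using Esym by (auto simp: sphere_def nbhd_def)
    have qY: "q \<in> Y" using parity[OF p qV] dq by simp
    have "q \<noteq> p" using dist0[OF xV[OF p] qV] dq by auto
    then show "q \<in> {q \<in> Y. q \<noteq> p \<and> E q B \<and> lam Y' E p q = c 2}"
      using qY Eq lam_iff[OF p qY] dq by auto
  qed
next
  show "{q \<in> Y. q \<noteq> p \<and> E q B \<and> lam Y' E p q = c 2} \<subseteq> sphere V E p 2 \<inter> nbhd V E B"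
    using lam_iff[OF p] Esym xV by (auto simp: sphere_def nbhd_def)
qed

lemma flag:
  assumes p: "p \<in> Y" and B: "B \<in> Y'" and pB: "E p B"
  shows "card {q \<in> Y. q \<noteq> p \<and> E q B \<and> lam Y' E p q = c 2} = b 1"
proof -
  have BV: "B \<in> V" using EV pB by auto
  have "dist E p B = 1" using dist1[OF xV[OF p] BV] pB by simp
  then have "b_num V E 1 p B = b 1" using reg[OF p BV] by simp
  then show ?thesis using sphere2_eq[OF p B] by (simp add: b_num_def eval_nat_numeral)
qed

lemma nonflag:
  assumes p: "p \<in> Y" and B: "B \<in> Y'" and pB: "\<not> E p B"
  shows "card {q \<in> Y. E q B \<and> lam Y' E p q = c 2} = c 3"
proof -
  have BV: "B \<in> V" using B VY by auto
  have "odd (dist E p B)" using parity[OF p BV] B notY' VY by auto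
  moreover have "dist E p B \<le> 4" using dist_le4[OF p BV] .
  moreover have "dist E p B \<noteq> 1" using dist1[OF xV[OF p] BV] pB by simp
  ultimately have d3: "dist E p B = 3" using odd4[of "dist E p B"] by linarith
  then have "c_num V E 3 p B = c 3" using reg[OF p BV] by simp
  moreover have "{q \<in> Y. E q B \<and> lam Y' E p q = c 2} = {q \<in> Y. q \<noteq> p \<and> E q B \<and> lam Y' E p q = c 2}"
    using pB by auto
  ultimately show ?thesis using sphere2_eq[OF p B] by (simp add: c_num_def eval_nat_numeral)
qed

lemma point_deg:
  assumes p: "p \<in> Y" shows "card {B \<in> Y'. E p B} = b 0"
proof -
  have pV: "p \<in> V" using xV[OF p] .
  have "{B \<in> Y'. E p B} = sphere V E p 1 \<inter> nbhd V E p"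
    using dist1[OF pV] EV Eside p notY' by (auto simp: sphere_def nbhd_def) (metis notY')
  moreover have "b_num V E 0 p p = b 0" using reg[OF p pV] dist0[OF pV pV] by simp
  ultimately show ?thesis by (simp add: b_num_def)
qed

lemma block_nbhd:
  assumes B: "B \<in> Y'" shows "{p \<in> Y. E p B} = nbhd V E B"
  using Eside Esym EV B VY by (auto simp: nbhd_def) blast+

end

theorem lemma5p1:
  fixes V Y Y' :: "'a set" and E :: "'a \<Rightarrow> 'a \<Rightarrow> bool" and b c :: "nat \<Rightarrow> nat"
    and b'0 :: nat
  assumes dsr: "distance_semiregular V E Y Y' b c"
    and Yne: "Y \<noteq> {}"
    and ecc4: "\<forall>x\<in>Y. ecc V E x = 4"
    and val': "\<forall>y\<in>Y'. card (nbhd V E y) = b'0"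
  shows "\<exists>v bb. real v = 1 + real (b 0 * b 1) / real (c 2)
                  + real (b 0 * b 1 * b 2 * b 3) / real (c 2 * c 3 * c 4)
          \<and> real bb = real (b 0) + real (b 0 * b 1 * b 2) / real (c 2 * c 3)
          \<and> SPBIBD Y Y' E v bb (b 0) b'0 (c 2) 0 (b 1) (c 3)"
proof -
  interpret dsr4 V E Y Y' b c using dsr ecc4 by unfold_locales
  obtain x where x: "x \<in> Y" using Yne by blast
  have fY: "finite Y" and fY': "finite Y'" using finV VY by auto
  have des: "design Y Y' E (card Y) (card Y') (b 0) b'0"
    unfolding design_def
  proof (intro conjI ballI)
    fix B assume B: "B \<in> Y'"
    show "card {p \<in> Y. E p B} = b'0" using block_nbhd[OF B] val' B by simp
  next
    fix p assume p: "p \<in> Y"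
    show "card {B \<in> Y'. E p B} = b 0" by (rule point_deg[OF p])
  qed (rule fY, rule fY', rule refl, rule refl)
  have spb: "SPBIBD Y Y' E (card Y) (card Y') (b 0) b'0 (c 2) 0 (b 1) (c 3)"
    unfolding SPBIBD_def
  proof (intro conjI ballI impI)
    show "design Y Y' E (card Y) (card Y') (b 0) b'0" by (rule des)
  next
    fix p q assume a: "p \<in> Y" "q \<in> Y" "p \<noteq> q"
    from lam_cases[OF a] show "lam Y' E p q = c 2 \<or> lam Y' E p q = 0"
      by (elim disjE conjE) simp_all
  next
    fix p B assume "p \<in> Y" "B \<in> Y'" "E p B"
    then show "card {q \<in> Y. q \<noteq> p \<and> E q B \<and> lam Y' E p q = c 2} = b 1" by (rule flag)
  next
    fix p B assume "p \<in> Y" "B \<in> Y'" "\<not> E p B"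
    then show "card {q \<in> Y. E q B \<and> lam Y' E p q = c 2} = c 3" by (rule nonflag)
  qed
  note h = conjunct1[OF sphere_cards[OF x]] conjunct2[OF sphere_cards[OF x]]
  show ?thesis
    by (rule exI[of _ "card Y"], rule exI[of _ "card Y'"], intro conjI h spb)
qed

end
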